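(* The model structure $\mathbb{C}^F$ associated to a functor $F:\mathcal{C}\to\mathscr{E}'$ need not be proper: there exist a bicomplete category $\mathcal{C}$ and a functor $F:\mathcal{C}\to\mathscr{E}'$ for which $\mathbb{C}^F$ is not right proper, and there exist a bicomplete category $\mathcal{C}$ and a functor $F:\mathcal{C}\to\mathscr{E}'$ for which $\mathbb{C}^F$ is not left proper.
   Context: Bicomplete means having all finite limits and finite colimits. $\mathscr{E}'$ is the totally ordered category with three objects $\varnothing\to E\to *$. For a functor $F:\mathcal{C}\to\mathscr{E}'$, $\mathbb{C}^F$ is the model structure on $\mathcal{C}$ with cofibrations $\{A\to B: F(B)\ne\varnothing\}\cup\mathrm{iso}\,\mathcal{C}$, fibrations $\{X\to Y: F(X)\neq *\}\cup\mathrm{iso}\,\mathcal{C}$, and weak equivalences $\{f: F(f)=1_\varnothing\text{ or }F(f)=1_*\}\cup\mathrm{iso}\,\mathcal{C}$. Left (resp. right) proper: pushouts of weak equivalences along cofibrations (resp. pullbacks along fibrations) are weak equivalences. *)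

theory Defs
  imports Main
begin

section \<open>Categories (arrows composed as Comp g f = g \<circ> f, defined when Cod f = Dom g)\<close>

record ('o, 'm) cat =
  Obj  :: "'o set"
  Arr  :: "'m set"
  Dom  :: "'m \<Rightarrow> 'o"
  Cod  :: "'m \<Rightarrow> 'o"
  Id   :: "'o \<Rightarrow> 'm"
  Comp :: "'m \<Rightarrow> 'm \<Rightarrow> 'm"

definition category :: "('o, 'm) cat \<Rightarrow> bool" where
  "category C \<longleftrightarrow>
     (\<forall>f\<in>Arr C. Dom C f \<in> Obj C \<and> Cod C f \<in> Obj C) \<and>
     (\<forall>a\<in>Obj C. Id C a \<in> Arr C \<and> Dom C (Id C a) = a \<and> Cod C (Id C a) = a) \<and>
     (\<forall>f\<in>Arr C. \<forall>g\<in>Arr C. Cod C f = Dom C g \<longrightarrow>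
        Comp C g f \<in> Arr C \<and> Dom C (Comp C g f) = Dom C f \<and> Cod C (Comp C g f) = Cod C g) \<and>
     (\<forall>f\<in>Arr C. Comp C f (Id C (Dom C f)) = f \<and> Comp C (Id C (Cod C f)) f = f) \<and>
     (\<forall>f\<in>Arr C. \<forall>g\<in>Arr C. \<forall>h\<in>Arr C. Cod C f = Dom C g \<longrightarrow> Cod C g = Dom C h \<longrightarrow>
        Comp C h (Comp C g f) = Comp C (Comp C h g) f)"

definition iso :: "('o, 'm) cat \<Rightarrow> 'm \<Rightarrow> bool" where
  "iso C f \<longleftrightarrow> f \<in> Arr C \<and>
     (\<exists>g\<in>Arr C. Dom C g = Cod C f \<and> Cod C g = Dom C f \<and>
        Comp C g f = Id C (Dom C f) \<and> Comp C f g = Id C (Cod C f))"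

definition is_functor :: "('o, 'm) cat \<Rightarrow> ('p, 'n) cat \<Rightarrow> ('o \<Rightarrow> 'p) \<Rightarrow> ('m \<Rightarrow> 'n) \<Rightarrow> bool" where
  "is_functor C D Fo Fa \<longleftrightarrow>
     (\<forall>a\<in>Obj C. Fo a \<in> Obj D) \<and>
     (\<forall>f\<in>Arr C. Fa f \<in> Arr D \<and> Dom D (Fa f) = Fo (Dom C f) \<and> Cod D (Fa f) = Fo (Cod C f)) \<and>
     (\<forall>a\<in>Obj C. Fa (Id C a) = Id D (Fo a)) \<and>
     (\<forall>f\<in>Arr C. \<forall>g\<in>Arr C. Cod C f = Dom C g \<longrightarrow> Fa (Comp C g f) = Comp D (Fa g) (Fa f))"

definition cone :: "('o, 'm) cat \<Rightarrow> ('j, 'k) cat \<Rightarrow> ('j \<Rightarrow> 'o) \<Rightarrow> ('k \<Rightarrow> 'm)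
                    \<Rightarrow> 'o \<Rightarrow> ('j \<Rightarrow> 'm) \<Rightarrow> bool" where
  "cone C J Do Da c leg \<longleftrightarrow> c \<in> Obj C \<and>
     (\<forall>j\<in>Obj J. leg j \<in> Arr C \<and> Dom C (leg j) = c \<and> Cod C (leg j) = Do j) \<and>
     (\<forall>u\<in>Arr J. Comp C (Da u) (leg (Dom J u)) = leg (Cod J u))"

definition is_limit :: "('o, 'm) cat \<Rightarrow> ('j, 'k) cat \<Rightarrow> ('j \<Rightarrow> 'o) \<Rightarrow> ('k \<Rightarrow> 'm)
                    \<Rightarrow> 'o \<Rightarrow> ('j \<Rightarrow> 'm) \<Rightarrow> bool" where
  "is_limit C J Do Da c leg \<longleftrightarrow> cone C J Do Da c leg \<and>
     (\<forall>c' leg'. cone C J Do Da c' leg' \<longrightarrow>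
        (\<exists>!h. h \<in> Arr C \<and> Dom C h = c' \<and> Cod C h = c \<and>
              (\<forall>j\<in>Obj J. Comp C (leg j) h = leg' j)))"

definition cocone :: "('o, 'm) cat \<Rightarrow> ('j, 'k) cat \<Rightarrow> ('j \<Rightarrow> 'o) \<Rightarrow> ('k \<Rightarrow> 'm)
                    \<Rightarrow> 'o \<Rightarrow> ('j \<Rightarrow> 'm) \<Rightarrow> bool" where
  "cocone C J Do Da c leg \<longleftrightarrow> c \<in> Obj C \<and>
     (\<forall>j\<in>Obj J. leg j \<in> Arr C \<and> Dom C (leg j) = Do j \<and> Cod C (leg j) = c) \<and>
     (\<forall>u\<in>Arr J. Comp C (leg (Cod J u)) (Da u) = leg (Dom J u))"

definition is_colimit :: "('o, 'm) cat \<Rightarrow> ('j, 'k) cat \<Rightarrow> ('j \<Rightarrow> 'o) \<Rightarrow> ('k \<Rightarrow> 'm)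
                    \<Rightarrow> 'o \<Rightarrow> ('j \<Rightarrow> 'm) \<Rightarrow> bool" where
  "is_colimit C J Do Da c leg \<longleftrightarrow> cocone C J Do Da c leg \<and>
     (\<forall>c' leg'. cocone C J Do Da c' leg' \<longrightarrow>
        (\<exists>!h. h \<in> Arr C \<and> Dom C h = c \<and> Cod C h = c' \<and>
              (\<forall>j\<in>Obj J. Comp C h (leg j) = leg' j)))"

text \<open>Finite index categories: every finite category is isomorphic to one whose objects
  and arrows are natural numbers, so quantifying over those is no restriction.\<close>
definition finite_category :: "(nat, nat) cat \<Rightarrow> bool" where
  "finite_category J \<longleftrightarrow> category J \<and> finite (Obj J) \<and> finite (Arr J)"

definition bicomplete :: "('o, 'm) cat \<Rightarrow> bool" where
  "bicomplete C \<longleftrightarrow>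
     (\<forall>(J :: (nat, nat) cat) Do Da. finite_category J \<and> is_functor J C Do Da \<longrightarrow>
        (\<exists>c leg. is_limit C J Do Da c leg) \<and> (\<exists>c leg. is_colimit C J Do Da c leg))"

text \<open>Square  P --a--> X --w--> Y  and  P --b--> Z --p--> Y  is a pullback of the cospan (w, p).\<close>
definition is_pullback :: "('o, 'm) cat \<Rightarrow> 'm \<Rightarrow> 'm \<Rightarrow> 'm \<Rightarrow> 'm \<Rightarrow> bool" where
  "is_pullback C w p a b \<longleftrightarrow>
     w \<in> Arr C \<and> p \<in> Arr C \<and> a \<in> Arr C \<and> b \<in> Arr C \<and>
     Cod C w = Cod C p \<and> Cod C a = Dom C w \<and> Cod C b = Dom C p \<and> Dom C a = Dom C b \<and>
     Comp C w a = Comp C p b \<and>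
     (\<forall>a' b'. a' \<in> Arr C \<and> b' \<in> Arr C \<and> Dom C a' = Dom C b' \<and>
        Cod C a' = Dom C w \<and> Cod C b' = Dom C p \<and> Comp C w a' = Comp C p b' \<longrightarrow>
        (\<exists>!h. h \<in> Arr C \<and> Dom C h = Dom C a' \<and> Cod C h = Dom C a \<and>
              Comp C a h = a' \<and> Comp C b h = b'))"

text \<open>Square  A --w--> B --a--> Q  and  A --i--> Z --b--> Q  is a pushout of the span (w, i).\<close>
definition is_pushout :: "('o, 'm) cat \<Rightarrow> 'm \<Rightarrow> 'm \<Rightarrow> 'm \<Rightarrow> 'm \<Rightarrow> bool" where
  "is_pushout C w i a b \<longleftrightarrow>
     w \<in> Arr C \<and> i \<in> Arr C \<and> a \<in> Arr C \<and> b \<in> Arr C \<and>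
     Dom C w = Dom C i \<and> Dom C a = Cod C w \<and> Dom C b = Cod C i \<and> Cod C a = Cod C b \<and>
     Comp C a w = Comp C b i \<and>
     (\<forall>a' b'. a' \<in> Arr C \<and> b' \<in> Arr C \<and> Cod C a' = Cod C b' \<and>
        Dom C a' = Cod C w \<and> Dom C b' = Cod C i \<and> Comp C a' w = Comp C b' i \<longrightarrow>
        (\<exists>!h. h \<in> Arr C \<and> Dom C h = Cod C a \<and> Cod C h = Cod C a' \<and>
              Comp C h a = a' \<and> Comp C h b = b'))"

section \<open>The category E' : the total order  \<emptyset> \<rightarrow> E \<rightarrow> *\<close>

datatype eobj = EEmpty | EE | EStar

fun erank :: "eobj \<Rightarrow> nat" where
  "erank EEmpty = 0" | "erank EE = 1" | "erank EStar = 2"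

definition Eprime :: "(eobj, eobj \<times> eobj) cat" where
  "Eprime = \<lparr> Obj = UNIV, Arr = {(x, y). erank x \<le> erank y}, Dom = fst, Cod = snd,
              Id = (\<lambda>x. (x, x)), Comp = (\<lambda>g f. (fst f, snd g)) \<rparr>"

definition cofF :: "('o, 'm) cat \<Rightarrow> ('o \<Rightarrow> eobj) \<Rightarrow> 'm \<Rightarrow> bool" where
  "cofF C Fo f \<longleftrightarrow> f \<in> Arr C \<and> (Fo (Cod C f) \<noteq> EEmpty \<or> iso C f)"

definition fibF :: "('o, 'm) cat \<Rightarrow> ('o \<Rightarrow> eobj) \<Rightarrow> 'm \<Rightarrow> bool" where
  "fibF C Fo f \<longleftrightarrow> f \<in> Arr C \<and> (Fo (Dom C f) \<noteq> EStar \<or> iso C f)"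

definition weF :: "('o, 'm) cat \<Rightarrow> ('m \<Rightarrow> eobj \<times> eobj) \<Rightarrow> 'm \<Rightarrow> bool" where
  "weF C Fa f \<longleftrightarrow> f \<in> Arr C \<and>
     (Fa f = Id Eprime EEmpty \<or> Fa f = Id Eprime EStar \<or> iso C f)"

definition right_proper :: "('o, 'm) cat \<Rightarrow> ('o \<Rightarrow> eobj) \<Rightarrow> ('m \<Rightarrow> eobj \<times> eobj) \<Rightarrow> bool" where
  "right_proper C Fo Fa \<longleftrightarrow>
     (\<forall>w p a b. weF C Fa w \<and> fibF C Fo p \<and> is_pullback C w p a b \<longrightarrow> weF C Fa b)"

definition left_proper :: "('o, 'm) cat \<Rightarrow> ('o \<Rightarrow> eobj) \<Rightarrow> ('m \<Rightarrow> eobj \<times> eobj) \<Rightarrow> bool" where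
  "left_proper C Fo Fa \<longleftrightarrow>
     (\<forall>w i a b. weF C Fa w \<and> cofF C Fo i \<and> is_pushout C w i a b \<longrightarrow> weF C Fa b)"

end

theory Submission
  imports Defs
begin

definition le4 :: "nat \<Rightarrow> nat \<Rightarrow> bool" where
  "le4 i j \<longleftrightarrow> i < 4 \<and> j < 4 \<and> (i = 0 \<or> j = 3 \<or> i = j)"

definition C4 :: "(nat, nat) cat" where
  "C4 = \<lparr> Obj = {..<4}, Arr = {f. le4 (f div 4) (f mod 4)}, Dom = (\<lambda>f. f div 4),
          Cod = (\<lambda>f. f mod 4), Id = (\<lambda>a. 4*a+a), Comp = (\<lambda>g f. 4*(f div 4) + g mod 4) \<rparr>"

lemma dm4[simp]: "j < 4 \<Longrightarrow> (4*i+j) div (4::nat) = i" "j < 4 \<Longrightarrow> (4*i+j) mod (4::nat) = j"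
  by auto

lemma C4_simps[simp]: "Obj C4 = {..<4}"
  "Dom C4 f = f div 4" "Cod C4 f = f mod 4" "Id C4 a = 4*a+a"
  "Comp C4 g f = 4*(f div 4) + g mod 4"
  by (auto simp: C4_def)

lemma arr_C4[simp]: "f \<in> Arr C4 \<longleftrightarrow> le4 (f div 4) (f mod 4)"
  by (simp add: C4_def)

lemma arr_C4': "Arr C4 = {f. le4 (f div 4) (f mod 4)}" by (simp add: C4_def)

lemma obj4: "(a::nat) < 4 \<longleftrightarrow> a \<in> {0,1,2,3}" by auto

lemma arr_enum: "f \<in> Arr C4 \<longleftrightarrow> f \<in> {0,1,2,3,5,7,10,11,15}"
proof
  assume "f \<in> Arr C4"
  then have "f div 4 < 4" "le4 (f div 4) (f mod 4)" by (auto simp: C4_def le4_def)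
  then have "f \<in> {..<16}" "le4 (f div 4) (f mod 4)" by auto
  then show "f \<in> {0,1,2,3,5,7,10,11,15}" by (simp add: lessThan_nat_numeral le4_def) (auto simp: le4_def)
next
  assume "f \<in> {0,1,2,3,5,7,10,11,15}"
  then show "f \<in> Arr C4" by (auto simp: C4_def le4_def)
qed

lemma arr_eq: "f = 4 * (f div 4) + f mod (4::nat)" by simp

lemma arr_set: "Arr C4 = {0,1,2,3,5,7,10,11,15}" using arr_enum by blast

lemma five[simp]: "(a::nat) < 4 \<Longrightarrow> 5*a div 4 = a" "(a::nat) < 4 \<Longrightarrow> 5*a mod 4 = a"
  by (auto simp: obj4)

lemma le4_lt: "le4 i j \<Longrightarrow> i < 4" "le4 i j \<Longrightarrow> j < 4" by (auto simp: le4_def)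

lemma cat_C4: "category C4"
  unfolding category_def arr_C4' by (auto simp: le4_def)

lemma iso_C4: "iso C4 f \<Longrightarrow> f div 4 = f mod 4"
  unfolding iso_def arr_C4' by (auto simp: le4_def)

definition glb :: "nat set \<Rightarrow> nat" where
  "glb S = (if S \<subseteq> {3} then 3 else if S \<subseteq> {1,3} then 1 else if S \<subseteq> {2,3} then 2 else 0)"
definition lub :: "nat set \<Rightarrow> nat" where
  "lub S = (if S \<subseteq> {0} then 0 else if S \<subseteq> {0,1} then 1 else if S \<subseteq> {0,2} then 2 else 3)"

lemma glb_props: assumes "S \<subseteq> {..<4}"
  shows "glb S < 4" "\<And>s. s \<in> S \<Longrightarrow> le4 (glb S) s"
    "\<And>c. c < 4 \<Longrightarrow> (\<forall>s\<in>S. le4 c s) \<Longrightarrow> le4 c (glb S)"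
proof -
  show "glb S < 4" by (simp add: glb_def)
  fix s assume "s \<in> S"
  then show "le4 (glb S) s" using assms unfolding glb_def le4_def by auto
next
  fix c :: nat assume c: "c < 4" and h: "\<forall>s\<in>S. le4 c s"
  have "c = 0 \<or> c = 1 \<or> c = 2 \<or> c = 3" using c by auto
  then show "le4 c (glb S)"
  proof (elim disjE)
    assume "c = 0" then show ?thesis by (simp add: le4_def glb_def)
  next
    assume c1: "c = 1"
    then have "S \<subseteq> {1,3}" using h assms unfolding le4_def by auto
    then show ?thesis using c1 unfolding glb_def le4_def by auto
  next
    assume c1: "c = 2"
    then have "S \<subseteq> {2,3}" using h assms unfolding le4_def by auto
    then have "S \<subseteq> {1,3} \<Longrightarrow> S \<subseteq> {3}" by auto
    then show ?thesis using c1 \<open>S \<subseteq> {2,3}\<close> unfolding glb_def le4_def by auto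
  next
    assume c1: "c = 3"
    then have "S \<subseteq> {3}" using h assms unfolding le4_def by auto
    then show ?thesis using c1 unfolding glb_def le4_def by auto
  qed
qed

lemma lub_props: assumes "S \<subseteq> {..<4}"
  shows "lub S < 4" "\<And>s. s \<in> S \<Longrightarrow> le4 s (lub S)"
    "\<And>c. c < 4 \<Longrightarrow> (\<forall>s\<in>S. le4 s c) \<Longrightarrow> le4 (lub S) c"
proof -
  show "lub S < 4" by (simp add: lub_def)
  fix s assume "s \<in> S"
  then show "le4 s (lub S)" using assms unfolding lub_def le4_def by auto
next
  fix c :: nat assume c: "c < 4" and h: "\<forall>s\<in>S. le4 s c"
  have "c = 0 \<or> c = 1 \<or> c = 2 \<or> c = 3" using c by auto
  then show "le4 (lub S) c"
  proof (elim disjE)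
    assume "c = 3" then show ?thesis by (simp add: le4_def lub_def)
  next
    assume c1: "c = 1"
    then have "S \<subseteq> {0,1}" using h assms unfolding le4_def by auto
    then show ?thesis using c1 unfolding lub_def le4_def by auto
  next
    assume c1: "c = 2"
    then have "S \<subseteq> {0,2}" using h assms unfolding le4_def by auto
    then have "S \<subseteq> {0,1} \<Longrightarrow> S \<subseteq> {0}" by auto
    then show ?thesis using c1 \<open>S \<subseteq> {0,2}\<close> unfolding lub_def le4_def by auto
  next
    assume c1: "c = 0"
    then have "S \<subseteq> {0}" using h assms unfolding le4_def by auto
    then show ?thesis using c1 unfolding lub_def le4_def by auto
  qed
qed

lemma bicomplete_C4: "bicomplete C4"
  unfolding bicomplete_def
proof (intro allI impI conjI)
  fix J :: "(nat,nat) cat" and Do Da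
  assume "finite_category J \<and> is_functor J C4 Do Da"
  then have F: "is_functor J C4 Do Da" by simp
  have S: "Do ` Obj J \<subseteq> {..<4}" using F unfolding is_functor_def by auto
  have Fa: "\<And>u. u \<in> Arr J \<Longrightarrow> le4 (Do (Dom J u)) (Do (Cod J u)) \<and> Da u div 4 = Do (Dom J u)
      \<and> Da u mod 4 = Do (Cod J u)"
    using F unfolding is_functor_def by auto
  define c where "c = glb (Do ` Obj J)"
  note g = glb_props[OF S, folded c_def]
  have cn: "cone C4 J Do Da c (\<lambda>j. 4*c + Do j)"
    unfolding cone_def
  proof (intro conjI ballI)
    fix j assume "j \<in> Obj J" then have "Do j < 4" using S by auto
  qed (use S g Fa in \<open>auto simp: le4_def\<close>)
  have un: "\<exists>!h. h \<in> Arr C4 \<and> Dom C4 h = c' \<and> Cod C4 h = c \<and>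
              (\<forall>j\<in>Obj J. Comp C4 (4*c + Do j) h = leg' j)"
    if cn': "cone C4 J Do Da c' leg'" for c' leg'
  proof -
    have cn: "c' \<in> Obj C4 \<and>
          (\<forall>j\<in>Obj J. leg' j \<in> Arr C4 \<and> Dom C4 (leg' j) = c' \<and> Cod C4 (leg' j) = Do j)"
      using cn' unfolding cone_def by blast
    have "\<forall>x\<in>Obj J. le4 c' (Do x)" using cn by auto
    then have le: "le4 c' c" using cn g(3)[of c'] by auto
    show ?thesis
    proof
      show "4*c'+c \<in> Arr C4 \<and> Dom C4 (4*c'+c) = c' \<and> Cod C4 (4*c'+c) = c \<and>
              (\<forall>j\<in>Obj J. Comp C4 (4*c + Do j) (4*c'+c) = leg' j)"
      proof (intro conjI ballI)
        fix j assume j: "j \<in> Obj J"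
        have "Do j < 4" using S j by auto
        then show "Comp C4 (4*c + Do j) (4*c'+c) = leg' j"
          using le cn j arr_eq[of "leg' j"] by (auto simp: le4_def)
      qed (use le in \<open>auto simp: le4_def\<close>)
    next
      fix h assume "h \<in> Arr C4 \<and> Dom C4 h = c' \<and> Cod C4 h = c \<and>
              (\<forall>j\<in>Obj J. Comp C4 (4*c + Do j) h = leg' j)"
      then show "h = 4*c'+c" using arr_eq[of h] by auto
    qed
  qed
  show "\<exists>c leg. is_limit C4 J Do Da c leg"
    using cn un unfolding is_limit_def by blast
next
  fix J :: "(nat,nat) cat" and Do Da
  assume "finite_category J \<and> is_functor J C4 Do Da"
  then have F: "is_functor J C4 Do Da" by simp
  have S: "Do ` Obj J \<subseteq> {..<4}" using F unfolding is_functor_def by auto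
  have Fa: "\<And>u. u \<in> Arr J \<Longrightarrow> le4 (Do (Dom J u)) (Do (Cod J u)) \<and> Da u div 4 = Do (Dom J u)
      \<and> Da u mod 4 = Do (Cod J u)"
    using F unfolding is_functor_def by auto
  define c where "c = lub (Do ` Obj J)"
  note g = lub_props[OF S, folded c_def]
  have cn: "cocone C4 J Do Da c (\<lambda>j. 4*Do j + c)"
    unfolding cocone_def
  proof (intro conjI ballI)
    fix j assume "j \<in> Obj J" then have "Do j < 4" using S by auto
  qed (use S g Fa in \<open>auto simp: le4_def\<close>)
  have un: "\<exists>!h. h \<in> Arr C4 \<and> Dom C4 h = c \<and> Cod C4 h = c' \<and>
              (\<forall>j\<in>Obj J. Comp C4 h (4*Do j + c) = leg' j)"
    if cn': "cocone C4 J Do Da c' leg'" for c' leg'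
  proof -
    have cn: "c' \<in> Obj C4 \<and>
          (\<forall>j\<in>Obj J. leg' j \<in> Arr C4 \<and> Dom C4 (leg' j) = Do j \<and> Cod C4 (leg' j) = c')"
      using cn' unfolding cocone_def by blast
    have "\<forall>x\<in>Obj J. le4 (Do x) c'" using cn by auto
    then have le: "le4 c c'" using cn g(3)[of c'] by auto
    show ?thesis
    proof
      show "4*c+c' \<in> Arr C4 \<and> Dom C4 (4*c+c') = c \<and> Cod C4 (4*c+c') = c' \<and>
              (\<forall>j\<in>Obj J. Comp C4 (4*c+c') (4*Do j + c) = leg' j)"
      proof (intro conjI ballI)
        fix j assume j: "j \<in> Obj J"
        have "Do j < 4" using S j by auto
        then show "Comp C4 (4*c+c') (4*Do j + c) = leg' j"
          using le cn j arr_eq[of "leg' j"] by (auto simp: le4_def)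
      qed (use le in \<open>auto simp: le4_def\<close>)
    next
      fix h assume "h \<in> Arr C4 \<and> Dom C4 h = c \<and> Cod C4 h = c' \<and>
              (\<forall>j\<in>Obj J. Comp C4 h (4*Do j + c) = leg' j)"
      then show "h = 4*c+c'" using arr_eq[of h] by auto
    qed
  qed
  show "\<exists>c leg. is_colimit C4 J Do Da c leg"
    using cn un unfolding is_colimit_def by blast
qed

definition Fo1 :: "nat \<Rightarrow> eobj" where
  "Fo1 i = (if i = 0 then EEmpty else if i = 2 then EE else EStar)"
definition Fo2 :: "nat \<Rightarrow> eobj" where
  "Fo2 i = (if i \<le> 1 then EEmpty else if i = 2 then EE else EStar)"

lemma functor_mono:
  assumes "\<And>i j. le4 i j \<Longrightarrow> erank (Fo i) \<le> erank (Fo j)"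
  shows "is_functor C4 Eprime Fo (\<lambda>f. (Fo (f div 4), Fo (f mod 4)))"
  using assms unfolding is_functor_def Eprime_def by (auto simp: le4_def)

lemma f1: "is_functor C4 Eprime Fo1 (\<lambda>f. (Fo1 (f div 4), Fo1 (f mod 4)))"
  by (rule functor_mono) (auto simp: le4_def Fo1_def)
lemma f2: "is_functor C4 Eprime Fo2 (\<lambda>f. (Fo2 (f div 4), Fo2 (f mod 4)))"
  by (rule functor_mono) (auto simp: le4_def Fo2_def)

lemma not_rp: "\<not> right_proper C4 Fo1 (\<lambda>f. (Fo1 (f div 4), Fo1 (f mod 4)))"
proof
  assume r: "right_proper C4 Fo1 (\<lambda>f. (Fo1 (f div 4), Fo1 (f mod 4)))"
  have pb: "is_pullback C4 7 11 1 2"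
    unfolding is_pullback_def
  proof (intro conjI allI impI)
    fix a' b' assume h: "a' \<in> Arr C4 \<and> b' \<in> Arr C4 \<and> Dom C4 a' = Dom C4 b' \<and>
        Cod C4 a' = Dom C4 7 \<and> Cod C4 b' = Dom C4 11 \<and> Comp C4 7 a' = Comp C4 11 b'"
    then have d: "a' div 4 = 0" by (auto simp: le4_def)
    show "\<exists>!h. h \<in> Arr C4 \<and> Dom C4 h = Dom C4 a' \<and> Cod C4 h = Dom C4 1 \<and>
              Comp C4 1 h = a' \<and> Comp C4 2 h = b'"
    proof
      show "0 \<in> Arr C4 \<and> Dom C4 0 = Dom C4 a' \<and> Cod C4 0 = Dom C4 1 \<and>
              Comp C4 1 0 = a' \<and> Comp C4 2 0 = b'"
        using h d arr_eq[of a'] arr_eq[of b'] by (auto simp: le4_def)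
    next
      fix x assume "x \<in> Arr C4 \<and> Dom C4 x = Dom C4 a' \<and> Cod C4 x = Dom C4 1 \<and>
              Comp C4 1 x = a' \<and> Comp C4 2 x = b'"
      then show "x = 0" using d arr_eq[of x] by auto
    qed
  qed (auto simp: le4_def)
  have "weF C4 (\<lambda>f. (Fo1 (f div 4), Fo1 (f mod 4))) 7"
    by (auto simp: weF_def le4_def Fo1_def Eprime_def)
  moreover have "fibF C4 Fo1 11" by (auto simp: fibF_def le4_def Fo1_def)
  ultimately have "weF C4 (\<lambda>f. (Fo1 (f div 4), Fo1 (f mod 4))) 2"
    using r pb unfolding right_proper_def by blast
  then show False using iso_C4[of 2] by (auto simp: weF_def Fo1_def Eprime_def)
qed

lemma not_lp: "\<not> left_proper C4 Fo2 (\<lambda>f. (Fo2 (f div 4), Fo2 (f mod 4)))"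
proof
  assume r: "left_proper C4 Fo2 (\<lambda>f. (Fo2 (f div 4), Fo2 (f mod 4)))"
  have po: "is_pushout C4 1 2 7 11"
    unfolding is_pushout_def
  proof (intro conjI allI impI)
    fix a' b' assume h: "a' \<in> Arr C4 \<and> b' \<in> Arr C4 \<and> Cod C4 a' = Cod C4 b' \<and>
        Dom C4 a' = Cod C4 1 \<and> Dom C4 b' = Cod C4 2 \<and> Comp C4 a' 1 = Comp C4 b' 2"
    then have d: "a' mod 4 = 3" by (auto simp: le4_def)
    show "\<exists>!h. h \<in> Arr C4 \<and> Dom C4 h = Cod C4 7 \<and> Cod C4 h = Cod C4 a' \<and>
              Comp C4 h 7 = a' \<and> Comp C4 h 11 = b'"
    proof
      show "15 \<in> Arr C4 \<and> Dom C4 15 = Cod C4 7 \<and> Cod C4 15 = Cod C4 a' \<and>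
              Comp C4 15 7 = a' \<and> Comp C4 15 11 = b'"
        using h d arr_eq[of a'] arr_eq[of b'] by (auto simp: le4_def)
    next
      fix x assume "x \<in> Arr C4 \<and> Dom C4 x = Cod C4 7 \<and> Cod C4 x = Cod C4 a' \<and>
              Comp C4 x 7 = a' \<and> Comp C4 x 11 = b'"
      then show "x = 15" using d arr_eq[of x] by auto
    qed
  qed (auto simp: le4_def)
  have "weF C4 (\<lambda>f. (Fo2 (f div 4), Fo2 (f mod 4))) 1"
    by (auto simp: weF_def le4_def Fo2_def Eprime_def)
  moreover have "cofF C4 Fo2 2" by (auto simp: cofF_def le4_def Fo2_def)
  ultimately have "weF C4 (\<lambda>f. (Fo2 (f div 4), Fo2 (f mod 4))) 11"
    using r po unfolding left_proper_def by blast
  then show False using iso_C4[of 11] by (auto simp: weF_def Fo2_def Eprime_def)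
qed

theorem corollary4:
  shows "(\<exists>(C :: (nat, nat) cat) Fo Fa. category C \<and> bicomplete C \<and>
            is_functor C Eprime Fo Fa \<and> \<not> right_proper C Fo Fa) \<and>
         (\<exists>(C :: (nat, nat) cat) Fo Fa. category C \<and> bicomplete C \<and>
            is_functor C Eprime Fo Fa \<and> \<not> left_proper C Fo Fa)"
  using cat_C4 bicomplete_C4 f1 f2 not_rp not_lp by blast

end
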